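(* For every finite set $C$ of level constraints and every level substitution $\theta$: $\theta \vDash C$ if and only if $\theta \vDash \widehat{C}$, where $\widehat{C}$ is obtained by applying the constraint-normalization procedure (described in the context) to every constraint of $C$.
   Context: Level expressions: $l ::= i \mid \mathtt{z} \mid \mathtt{s}\,l \mid l \sqcup l'$, with $i$ in an infinite set $\mathcal{I}$ of level variables equipped with a total order $<$. $\simeq$ is the smallest congruence on level expressions (closed under the constructors and under substitution of levels for level variables) containing $i_1 \sqcup (i_2 \sqcup i_3) \approx (i_1 \sqcup i_2) \sqcup i_3$, $i_1 \sqcup i_2 \approx i_2 \sqcup i_1$, $\mathtt{s}(i_1 \sqcup i_2) \approx \mathtt{s}\,i_1 \sqcup \mathtt{s}\,i_2$, $i \sqcup \mathtt{s}\,i \approx \mathtt{s}\,i$, $i \sqcup \mathtt{z} \approx i$, $i \sqcup i \approx i$. $\mathtt{s}^k l$ is $k$-fold application of $\mathtt{s}$. For a strictly increasing sequence $V = i_1, \dots, i_k$ of level variables and levels $l_{i}$, $\sqcup_{i \in V} l_i$ denotes $l_{i_1} \sqcup (l_{i_2} \sqcup \dots (l_{i_{k-1}} \sqcup l_{i_k})\dots)$. A level is in normal form if it has the form $\mathtt{s}^k\,\mathtt{z} \sqcup (\sqcup_{i \in V} \mathtt{s}^{n_i}\,i)$ with $n_i \le k$ for all $i \in V$; every level $l$ has a unique normal form $\hat{l}$ with $l \simeq \hat{l}$. A constraint is a pair $l_1 = l_2$; for a level substitution $\theta$ and a set of constraints $C$, $\theta \vDash C$ means $l_1\theta \simeq l_2\theta$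 for all $l_1 = l_2 \in C$. The normalization procedure on a constraint $l_1 = l_2$: first replace $l_1, l_2$ by $\hat{l_1}, \hat{l_2}$, written $l_p = \mathtt{s}^{k_p}\,\mathtt{z} \sqcup (\sqcup_{i \in V_p} \mathtt{s}^{n^p_i}\,i)$ for $p = 1,2$; then for each $i \in V_1 \cap V_2$: if $n^1_i < n^2_i$ remove the summand $\mathtt{s}^{n^1_i}\,i$ from $l_1$, and if $n^1_i > n^2_i$ remove the summand $\mathtt{s}^{n^2_i}\,i$ from $l_2$; finally subtract the minimum of the set $\{k_1, k_2\} \cup \{n^1_i\}_{i \in V_1} \cup \{n^2_i\}_{i \in V_2}$ (for the current $V_1, V_2$) from all these exponents. *)

theory Defs
  imports Main
begin

datatype 'v lvl = LVar 'v | Z | S "'v lvl" | Max "'v lvl" "'v lvl"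

fun subst :: "('v \<Rightarrow> 'v lvl) \<Rightarrow> 'v lvl \<Rightarrow> 'v lvl" where
  "subst \<theta> (LVar i) = \<theta> i"
| "subst \<theta> Z = Z"
| "subst \<theta> (S l) = S (subst \<theta> l)"
| "subst \<theta> (Max l l') = Max (subst \<theta> l) (subst \<theta> l')"

text \<open>The congruence: smallest congruence containing all substitution instances of the axioms
  (equivalently, closed under constructors and substitution).\<close>
inductive lvl_eq :: "'v lvl \<Rightarrow> 'v lvl \<Rightarrow> bool" (infix "\<simeq>" 50) where
  refl: "l \<simeq> l"
| sym: "l1 \<simeq> l2 \<Longrightarrow> l2 \<simeq> l1"
| trans: "l1 \<simeq> l2 \<Longrightarrow> l2 \<simeq> l3 \<Longrightarrow> l1 \<simeq> l3"
| congS: "l1 \<simeq> l2 \<Longrightarrow> S l1 \<simeq> S l2"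
| congMax: "l1 \<simeq> l2 \<Longrightarrow> l1' \<simeq> l2' \<Longrightarrow> Max l1 l1' \<simeq> Max l2 l2'"
| assoc: "Max l1 (Max l2 l3) \<simeq> Max (Max l1 l2) l3"
| comm: "Max l1 l2 \<simeq> Max l2 l1"
| distS: "S (Max l1 l2) \<simeq> Max (S l1) (S l2)"
| absS: "Max l (S l) \<simeq> S l"
| unitZ: "Max l Z \<simeq> l"
| idem: "Max l l \<simeq> l"

definition Spow :: "nat \<Rightarrow> 'v lvl \<Rightarrow> 'v lvl" where
  "Spow k l = (S ^^ k) l"

fun bigmax :: "('v \<times> nat) list \<Rightarrow> 'v lvl" where
  "bigmax [] = Z"
| "bigmax [(i, n)] = Spow n (LVar i)"
| "bigmax ((i, n) # xs) = Max (Spow n (LVar i)) (bigmax xs)"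

definition to_level :: "nat \<Rightarrow> ('v \<times> nat) list \<Rightarrow> 'v lvl" where
  "to_level k xs = (if xs = [] then Spow k Z else Max (Spow k Z) (bigmax xs))"

definition nf_data :: "nat \<Rightarrow> ('v::linorder \<times> nat) list \<Rightarrow> bool" where
  "nf_data k xs \<longleftrightarrow> sorted_wrt (<) (map fst xs) \<and> (\<forall>(i, n) \<in> set xs. n \<le> k)"

definition is_nf :: "'v::linorder lvl \<Rightarrow> bool" where
  "is_nf l \<longleftrightarrow> (\<exists>k xs. nf_data k xs \<and> l = to_level k xs)"

text \<open>Normal-form data of a level (unique, as stated in the paper).\<close>
definition nf_rep :: "'v::linorder lvl \<Rightarrow> nat \<times> ('v \<times> nat) list" where
  "nf_rep l = (THE p. nf_data (fst p) (snd p) \<and> l \<simeq> to_level (fst p) (snd p))"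

definition nf :: "'v::linorder lvl \<Rightarrow> 'v lvl" where
  "nf l = (THE l'. is_nf l' \<and> l \<simeq> l')"

type_synonym 'v constr = "'v lvl \<times> 'v lvl"

definition norm_constr :: "'v::linorder constr \<Rightarrow> 'v constr" where
  "norm_constr c = (let
     (k1, xs1) = nf_rep (fst c); (k2, xs2) = nf_rep (snd c);
     ys1 = filter (\<lambda>(i, n). \<not> (\<exists>n2. (i, n2) \<in> set xs2 \<and> n < n2)) xs1;
     ys2 = filter (\<lambda>(i, n). \<not> (\<exists>n1. (i, n1) \<in> set xs1 \<and> n < n1)) xs2;
     m = Min ({k1, k2} \<union> snd ` set ys1 \<union> snd ` set ys2);
     zs1 = map (\<lambda>(i, n). (i, n - m)) ys1;
     zs2 = map (\<lambda>(i, n). (i, n - m)) ys2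
   in (to_level (k1 - m) zs1, to_level (k2 - m) zs2))"

definition sat :: "('v \<Rightarrow> 'v lvl) \<Rightarrow> 'v constr set \<Rightarrow> bool" (infix "\<Turnstile>" 50) where
  "\<theta> \<Turnstile> C \<longleftrightarrow> (\<forall>(l1, l2) \<in> C. subst \<theta> l1 \<simeq> subst \<theta> l2)"

definition norm_constrs :: "'v::linorder constr set \<Rightarrow> 'v constr set" where
  "norm_constrs C = norm_constr ` C"

end

theory Submission
  imports Defs
begin

fun ev :: "('v \<Rightarrow> nat) \<Rightarrow> 'v lvl \<Rightarrow> nat" where
  "ev \<rho> (LVar i) = \<rho> i"
| "ev \<rho> Z = 0"
| "ev \<rho> (S l) = Suc (ev \<rho> l)"
| "ev \<rho> (Max a b) = max (ev \<rho> a) (ev \<rho> b)"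

lemma sound: "l1 \<simeq> l2 \<Longrightarrow> ev \<rho> l1 = ev \<rho> l2"
  by (induction rule: lvl_eq.induct) auto

lemma subst_eq: "l1 \<simeq> l2 \<Longrightarrow> subst \<theta> l1 \<simeq> subst \<theta> l2"
proof (induction rule: lvl_eq.induct)
  case (trans l1 l2 l3) then show ?case by (meson lvl_eq.trans)
qed (auto intro: lvl_eq.intros)

lemma ev_subst: "ev \<rho> (subst \<theta> l) = ev (\<lambda>i. ev \<rho> (\<theta> i)) l"
  by (induction l) auto

lemma ev_Spow: "ev \<rho> (Spow n l) = ev \<rho> l + n"
  by (induction n) (auto simp: Spow_def)

lemma Spow_Suc: "Spow (Suc n) l = S (Spow n l)" by (simp add: Spow_def)
lemma Spow_add: "Spow (m+n) l = Spow m (Spow n l)" by (simp add: Spow_def funpow_add)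
lemma Spow_0[simp]: "Spow 0 l = l" by (simp add: Spow_def)

lemma ev_bigmax: "xs \<noteq> [] \<Longrightarrow> ev \<rho> (bigmax xs) = Lattices_Big.Max ((\<lambda>(i,n). \<rho> i + n) ` set xs)"
  by (induction xs rule: bigmax.induct) (auto simp: ev_Spow)

lemma ev_to_level: "ev \<rho> (to_level k xs) = Lattices_Big.Max (insert k ((\<lambda>(i,n). \<rho> i + n) ` set xs))"
  by (auto simp: to_level_def ev_Spow ev_bigmax)

lemmas [trans] = lvl_eq.trans

lemma congL: "a \<simeq> b \<Longrightarrow> Max a c \<simeq> Max b c" by (simp add: lvl_eq.congMax lvl_eq.refl)
lemma congR: "a \<simeq> b \<Longrightarrow> Max c a \<simeq> Max c b" by (simp add: lvl_eq.congMax lvl_eq.refl)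
lemma MaxZ_l: "Max Z x \<simeq> x" by (meson lvl_eq.comm lvl_eq.trans lvl_eq.unitZ)
lemma assoc': "Max (Max a b) c \<simeq> Max a (Max b c)" by (simp add: lvl_eq.assoc lvl_eq.sym)

lemma dom_d: "Max x (Spow d x) \<simeq> Spow d x"
proof (induction d)
  case 0 then show ?case by (simp add: lvl_eq.idem)
next
  case (Suc d)
  have "Max x (S (Spow d x)) \<simeq> Max x (Max (Spow d x) (S (Spow d x)))"
    by (rule congR, rule lvl_eq.sym, rule lvl_eq.absS)
  also have "\<dots> \<simeq> Max (Max x (Spow d x)) (S (Spow d x))" by (rule lvl_eq.assoc)
  also have "\<dots> \<simeq> Max (Spow d x) (S (Spow d x))" by (rule congL[OF Suc])
  also have "\<dots> \<simeq> S (Spow d x)" by (rule lvl_eq.absS)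
  finally show ?case by (simp add: Spow_Suc)
qed

lemma dom_var: "n \<le> m \<Longrightarrow> Max (Spow n x) (Spow m x) \<simeq> Spow m x"
proof -
  assume "n \<le> m"
  then have "Spow m x = Spow (m-n) (Spow n x)" using Spow_add[of "m-n" n x] by simp
  then show ?thesis using dom_d[of "Spow n x" "m-n"] by simp
qed

lemma Spow_cong: "a \<simeq> b \<Longrightarrow> Spow n a \<simeq> Spow n b"
  by (induction n) (auto simp: Spow_Suc intro: lvl_eq.congS)

lemma Spow_Max: "Spow n (Max a b) \<simeq> Max (Spow n a) (Spow n b)"
proof (induction n)
  case 0 then show ?case by (simp add: lvl_eq.refl)
next
  case (Suc n)
  have "S (Spow n (Max a b)) \<simeq> S (Max (Spow n a) (Spow n b))" by (rule lvl_eq.congS[OF Suc])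
  also have "\<dots> \<simeq> Max (S (Spow n a)) (S (Spow n b))" by (rule lvl_eq.distS)
  finally show ?case by (simp add: Spow_Suc)
qed

lemma dom_Z: "n \<le> m \<Longrightarrow> Max (Spow n Z) (Spow m y) \<simeq> Spow m y"
proof -
  assume "n \<le> m"
  then have e: "Spow m y = Spow n (Spow (m-n) y)" using Spow_add[of n "m-n" y] by simp
  have "Max (Spow n Z) (Spow n (Spow (m-n) y)) \<simeq> Spow n (Max Z (Spow (m-n) y))"
    by (rule lvl_eq.sym, rule Spow_Max)
  also have "\<dots> \<simeq> Spow n (Spow (m-n) y)" by (rule Spow_cong, rule MaxZ_l)
  finally show ?thesis using e by simp
qed

fun atomlvl :: "'v option \<times> nat \<Rightarrow> 'v lvl" where
  "atomlvl (None, n) = Spow n Z"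
| "atomlvl (Some i, n) = Spow n (LVar i)"

definition domi :: "'v option \<times> nat \<Rightarrow> 'v option \<times> nat \<Rightarrow> bool" where
  "domi a b \<longleftrightarrow> snd a \<le> snd b \<and> (fst a = fst b \<or> fst a = None)"

lemma domi_eq: "domi a b \<Longrightarrow> Max (atomlvl a) (atomlvl b) \<simeq> atomlvl b"
  by (cases a; cases b; cases "fst a"; cases "fst b") (auto simp: domi_def dom_var dom_Z)

fun J :: "'v lvl list \<Rightarrow> 'v lvl" where
  "J [] = Z"
| "J (a # as) = Max a (J as)"

lemma J_append: "J (as @ bs) \<simeq> Max (J as) (J bs)"
proof (induction as)
  case Nil then show ?case by (simp add: MaxZ_l lvl_eq.sym)
next
  case (Cons a as)
  have "Max a (J (as @ bs)) \<simeq> Max a (Max (J as) (J bs))" by (rule congR[OF Cons])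
  also have "\<dots> \<simeq> Max (Max a (J as)) (J bs)" by (rule lvl_eq.assoc)
  finally show ?case by simp
qed

lemma absorb: "b \<in> set bs \<Longrightarrow> Max a b \<simeq> b \<Longrightarrow> Max a (J bs) \<simeq> J bs"
proof (induction bs)
  case Nil then show ?case by simp
next
  case (Cons c bs)
  show ?case
  proof (cases "b = c")
    case True
    have "Max a (Max c (J bs)) \<simeq> Max (Max a c) (J bs)" by (rule lvl_eq.assoc)
    also have "\<dots> \<simeq> Max c (J bs)" by (rule congL, use Cons True in simp)
    finally show ?thesis by simp
  next
    case False
    then have b: "b \<in> set bs" using Cons by simp
    have "Max a (Max c (J bs)) \<simeq> Max (Max a c) (J bs)" by (rule lvl_eq.assoc)
    also have "\<dots> \<simeq> Max (Max c a) (J bs)" by (rule congL, rule lvl_eq.comm)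
    also have "\<dots> \<simeq> Max c (Max a (J bs))" by (rule assoc')
    also have "\<dots> \<simeq> Max c (J bs)" by (rule congR, rule Cons.IH[OF b Cons.prems(2)])
    finally show ?thesis by simp
  qed
qed

lemma covered: "\<forall>a\<in>set as. \<exists>b\<in>set bs. Max a b \<simeq> b \<Longrightarrow> Max (J as) (J bs) \<simeq> J bs"
proof (induction as)
  case Nil then show ?case by (simp add: MaxZ_l)
next
  case (Cons a as)
  then obtain b where b: "b \<in> set bs" "Max a b \<simeq> b" by auto
  have "Max (Max a (J as)) (J bs) \<simeq> Max a (Max (J as) (J bs))" by (rule assoc')
  also have "\<dots> \<simeq> Max a (J bs)" by (rule congR, use Cons in simp)
  also have "\<dots> \<simeq> J bs" by (rule absorb[OF b])
  finally show ?case by simp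
qed

lemma mutual: "\<forall>a\<in>set as. \<exists>b\<in>set bs. Max a b \<simeq> b \<Longrightarrow> \<forall>a\<in>set bs. \<exists>b\<in>set as. Max a b \<simeq> b
  \<Longrightarrow> J as \<simeq> J bs"
proof -
  assume h1: "\<forall>a\<in>set as. \<exists>b\<in>set bs. Max a b \<simeq> b" and h2: "\<forall>a\<in>set bs. \<exists>b\<in>set as. Max a b \<simeq> b"
  have "J as \<simeq> Max (J bs) (J as)" by (rule lvl_eq.sym, rule covered[OF h2])
  also have "\<dots> \<simeq> Max (J as) (J bs)" by (rule lvl_eq.comm)
  also have "\<dots> \<simeq> J bs" by (rule covered[OF h1])
  finally show ?thesis .
qed

lemma mutual_domi: "\<forall>a\<in>set as. \<exists>b\<in>set bs. domi a b \<Longrightarrow> \<forall>a\<in>set bs. \<exists>b\<in>set as. domi a b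
  \<Longrightarrow> J (map atomlvl as) \<simeq> J (map atomlvl bs)"
  by (rule mutual) (use domi_eq in fastforce)+

fun atoms :: "'v lvl \<Rightarrow> ('v option \<times> nat) list" where
  "atoms (LVar i) = [(Some i, 0)]"
| "atoms Z = [(None, 0)]"
| "atoms (S l) = map (\<lambda>(x, n). (x, Suc n)) (atoms l)"
| "atoms (Max a b) = atoms a @ atoms b"

lemma atoms_ne: "atoms l \<noteq> []"
  by (induction l) auto

lemma J_S: "as \<noteq> [] \<Longrightarrow> S (J as) \<simeq> J (map S as)"
proof (induction as)
  case Nil then show ?case by simp
next
  case (Cons a as)
  show ?case
  proof (cases "as = []")
    case True
    have "S (Max a Z) \<simeq> S a" by (rule lvl_eq.congS, rule lvl_eq.unitZ)
    also have "\<dots> \<simeq> Max (S a) Z" by (rule lvl_eq.sym, rule lvl_eq.unitZ)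
    finally show ?thesis using True by simp
  next
    case False
    have "S (Max a (J as)) \<simeq> Max (S a) (S (J as))" by (rule lvl_eq.distS)
    also have "\<dots> \<simeq> Max (S a) (J (map S as))" by (rule congR, rule Cons.IH[OF False])
    finally show ?thesis by simp
  qed
qed

lemma atomlvl_shift: "atomlvl (x, Suc n) = S (atomlvl (x, n))"
  by (cases x) (auto simp: Spow_Suc)

lemma l_atoms: "l \<simeq> J (map atomlvl (atoms l))"
proof (induction l)
  case (LVar i) then show ?case by (simp add: lvl_eq.sym lvl_eq.unitZ)
next
  case Z then show ?case by (simp add: lvl_eq.sym lvl_eq.unitZ)
next
  case (S l)
  have m: "map atomlvl (map (\<lambda>(x, n). (x, Suc n)) as) = map S (map atomlvl as)" for as :: "('a option \<times> nat) list"
    by (induction as) (auto simp: atomlvl_shift)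
  have "S l \<simeq> S (J (map atomlvl (atoms l)))" by (rule lvl_eq.congS[OF S])
  also have "\<dots> \<simeq> J (map S (map atomlvl (atoms l)))" by (rule J_S, simp add: atoms_ne)
  finally show ?case by (simp only: atoms.simps m)
next
  case (Max a b)
  have "Max a b \<simeq> Max (J (map atomlvl (atoms a))) (J (map atomlvl (atoms b)))"
    by (rule lvl_eq.congMax[OF Max.IH])
  also have "\<dots> \<simeq> J (map atomlvl (atoms a) @ map atomlvl (atoms b))" by (rule lvl_eq.sym, rule J_append)
  finally show ?case by simp
qed


lemma bigmax_J: "xs \<noteq> [] \<Longrightarrow> bigmax xs \<simeq> J (map atomlvl (map (\<lambda>(i,n). (Some i, n)) xs))"
proof (induction xs rule: bigmax.induct)
  case 1 then show ?case by simp
next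
  case (2 i n) then show ?case by (simp add: lvl_eq.sym lvl_eq.unitZ)
next
  case (3 i n v vs)
  show ?case by (simp, rule congR, use 3 in simp)
qed

lemma to_level_J: "to_level k xs \<simeq> J (map atomlvl ((None, k) # map (\<lambda>(i,n). (Some i, n)) xs))"
proof (cases "xs = []")
  case True then show ?thesis by (simp add: to_level_def lvl_eq.sym lvl_eq.unitZ)
next
  case False
  have e1: "to_level k xs = Max (Spow k Z) (bigmax xs)" using False by (simp add: to_level_def)
  have e2: "J (map atomlvl ((None, k) # map (\<lambda>(i,n). (Some i, n)) xs))
     = Max (Spow k Z) (J (map atomlvl (map (\<lambda>(i,n). (Some i, n)) xs)))" by (simp only: list.map J.simps atomlvl.simps)
  show ?thesis unfolding e1 e2 by (rule congR, rule bigmax_J[OF False])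
qed

lemma nf_exists: "\<exists>k xs. nf_data k (xs :: ('v::linorder \<times> nat) list) \<and> l \<simeq> to_level k xs"
proof -
  define as where "as = atoms l"
  have ne: "as \<noteq> []" by (simp add: as_def atoms_ne)
  define k where "k = Lattices_Big.Max (snd ` set as)"
  define V where "V = Some -` (fst ` set as)"
  have fV: "finite V" unfolding V_def by (rule finite_vimageI) auto
  define M where "M i = Lattices_Big.Max {n. (Some i, n) \<in> set as}" for i
  have fin: "finite {n. (Some i, n) \<in> set as}" for i
    by (rule finite_subset[of _ "snd ` set as"]) force+
  have Min: "i \<in> V \<Longrightarrow> (Some i, M i) \<in> set as" for i
  proof -
    assume "i \<in> V"
    then have "{n. (Some i, n) \<in> set as} \<noteq> {}" by (force simp: V_def)
    from Max_in[OF fin this] show ?thesis by (simp add: M_def)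
  qed
  have Mge: "(Some i, n) \<in> set as \<Longrightarrow> n \<le> M i" for i n
    unfolding M_def by (rule Max_ge[OF fin]) simp
  have kge: "p \<in> set as \<Longrightarrow> snd p \<le> k" for p unfolding k_def by (rule Max_ge) auto
  have kin: "k \<in> snd ` set as" unfolding k_def by (rule Max_in) (use ne in auto)
  define xs where "xs = map (\<lambda>i. (i, M i)) (sorted_list_of_set V)"
  have nfd: "nf_data k xs"
    unfolding nf_data_def xs_def
  proof
    show "sorted_wrt (<) (map fst (map (\<lambda>i. (i, M i)) (sorted_list_of_set V)))"
      by (simp add: o_def)
    show "\<forall>(i, n)\<in>set (map (\<lambda>i. (i, M i)) (sorted_list_of_set V)). n \<le> k"
      using fV Min kge by fastforce
  qed
  have setxs: "set (map (\<lambda>(i,n). (Some i, n)) xs) = (\<lambda>i. (Some i, M i)) ` V"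
    using fV by (auto simp: xs_def)
  have "l \<simeq> J (map atomlvl as)" unfolding as_def by (rule l_atoms)
  also have "\<dots> \<simeq> J (map atomlvl ((None, k) # map (\<lambda>(i,n). (Some i, n)) xs))"
  proof (rule mutual_domi)
    show "\<forall>a\<in>set as. \<exists>b\<in>set ((None, k) # map (\<lambda>(i,n). (Some i, n)) xs). domi a b"
    proof
      fix a assume a: "a \<in> set as"
      obtain x n where an: "a = (x, n)" by fastforce
      show "\<exists>b\<in>set ((None, k) # map (\<lambda>(i,n). (Some i, n)) xs). domi a b"
      proof (cases x)
        case None then show ?thesis using kge[OF a] an by (auto simp: domi_def)
      next
        case (Some i)
        then have "i \<in> V" using a an by (force simp: V_def)
        then have h: "(Some i, M i) \<in> set (map (\<lambda>(i,n). (Some i, n)) xs)" by (subst setxs) blast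
        then have "(Some i, M i) \<in> set ((None, k) # map (\<lambda>(i,n). (Some i, n)) xs)" by (simp only: list.set_intros(2))
        moreover have "domi a (Some i, M i)" using Mge a an Some by (simp add: domi_def)
        ultimately show ?thesis by blast
      qed
    qed
    show "\<forall>a\<in>set ((None, k) # map (\<lambda>(i,n). (Some i, n)) xs). \<exists>b\<in>set as. domi a b"
    proof
      fix a assume a: "a \<in> set ((None, k) # map (\<lambda>(i,n). (Some i, n)) xs)"
      show "\<exists>b\<in>set as. domi a b"
      proof (cases "a = (None, k)")
        case True then show ?thesis using kin by (force simp: domi_def)
      next
        case False
        then have "a \<in> (\<lambda>i. (Some i, M i)) ` V" using a setxs by (metis set_ConsD)
        then obtain i where "i \<in> V" "a = (Some i, M i)" by blast
        then show ?thesis using Min by (force simp: domi_def)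
      qed
    qed
  qed
  also have "\<dots> \<simeq> to_level k xs" by (rule lvl_eq.sym, rule to_level_J)
  finally show ?thesis using nfd by blast
qed


lemma nf_keys: "nf_data k xs \<Longrightarrow> (i, n) \<in> set xs \<Longrightarrow> (i, n') \<in> set xs \<Longrightarrow> n = n'"
proof -
  assume "nf_data k xs" "(i, n) \<in> set xs" "(i, n') \<in> set xs"
  moreover have "inj_on fst (set xs)" using \<open>nf_data k xs\<close>
    by (simp add: nf_data_def strict_sorted_iff distinct_map)
  ultimately show ?thesis by (metis fst_conv inj_onD prod.inject)
qed

lemma nf_le: "nf_data k xs \<Longrightarrow> (i, n) \<in> set xs \<Longrightarrow> n \<le> k"
  unfolding nf_data_def by blast

lemma ev0: "nf_data k xs \<Longrightarrow> ev (\<lambda>_. 0) (to_level k xs) = k"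
  unfolding ev_to_level
proof (rule Max_eqI)
  assume a: "nf_data k xs"
  show "finite (insert k ((\<lambda>(i, n). 0 + n) ` set xs))" by simp
  show "k \<in> insert k ((\<lambda>(i, n). 0 + n) ` set xs)" by simp
  fix y assume "y \<in> insert k ((\<lambda>(i, n). 0 + n) ` set xs)"
  then consider "y = k" | i n where "(i, n) \<in> set xs" "y = n" by auto
  then show "y \<le> k" using nf_le[OF a] by cases auto
qed

lemma evi_in: "nf_data k xs \<Longrightarrow> (i, n) \<in> set xs \<Longrightarrow>
   ev (\<lambda>j. if j = i then Suc k else 0) (to_level k xs) = Suc k + n"
  unfolding ev_to_level
proof (rule Max_eqI)
  assume a: "nf_data k xs" "(i, n) \<in> set xs"
  show "finite (insert k ((\<lambda>(ia, n). (if ia = i then Suc k else 0) + n) ` set xs))" by simp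
  have "Suc k + n = (\<lambda>(ia, n). (if ia = i then Suc k else 0) + n) (i, n)" by simp
  then show "Suc k + n \<in> insert k ((\<lambda>(ia, n). (if ia = i then Suc k else 0) + n) ` set xs)"
    using a(2) by blast
  fix y assume "y \<in> insert k ((\<lambda>(ia, n). (if ia = i then Suc k else 0) + n) ` set xs)"
  then consider "y = k" | j m where "(j, m) \<in> set xs" "y = (if j = i then Suc k else 0) + m" by auto
  then show "y \<le> Suc k + n"
  proof cases
    case 1 then show ?thesis by simp
  next
    case 2
    show ?thesis
    proof (cases "j = i")
      case True
      then have "m = n" using nf_keys[OF a(1)] a(2) 2(1) by blast
      then show ?thesis using 2 True by simp
    next
      case False then show ?thesis using 2 nf_le[OF a(1) 2(1)] by simp
    qed
  qed
qed

lemma evi_out: "nf_data k xs \<Longrightarrow> i \<notin> fst ` set xs \<Longrightarrow>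
   ev (\<lambda>j. if j = i then Suc k else 0) (to_level k xs) = k"
  unfolding ev_to_level
proof (rule Max_eqI)
  assume a: "nf_data k xs" "i \<notin> fst ` set xs"
  show "finite (insert k ((\<lambda>(ia, n). (if ia = i then Suc k else 0) + n) ` set xs))" by simp
  show "k \<in> insert k ((\<lambda>(ia, n). (if ia = i then Suc k else 0) + n) ` set xs)" by simp
  fix y assume "y \<in> insert k ((\<lambda>(ia, n). (if ia = i then Suc k else 0) + n) ` set xs)"
  then consider "y = k" | j m where "(j, m) \<in> set xs" "y = (if j = i then Suc k else 0) + m" by auto
  then show "y \<le> k"
  proof cases
    case 1 then show ?thesis by simp
  next
    case 2
    then have "j \<noteq> i" using a(2) by force
    then show ?thesis using 2 nf_le[OF a(1) 2(1)] by simp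
  qed
qed

lemma sorted_eq: "sorted_wrt (<) (map fst (xs :: ('a::linorder \<times> 'b) list)) \<Longrightarrow> sorted_wrt (<) (map fst ys) \<Longrightarrow> set xs = set ys \<Longrightarrow> xs = ys"
proof (induction xs arbitrary: ys)
  case Nil then show ?case by simp
next
  case (Cons x xs)
  then obtain y ys' where ys: "ys = y # ys'" by (cases ys) auto
  have hx: "\<forall>z\<in>set xs. fst x < fst z" and hy: "\<forall>z\<in>set ys'. fst y < fst z"
    using Cons.prems ys by auto
  have "x = y"
  proof (rule ccontr)
    assume "x \<noteq> y"
    have "x \<in> set (y # ys')" using Cons.prems(3) ys by (metis list.set_intros(1))
    then have "x \<in> set ys'" using \<open>x \<noteq> y\<close> by simp
    have "y \<in> set (x # xs)" using Cons.prems(3) ys by (metis list.set_intros(1))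
    then have "y \<in> set xs" using \<open>x \<noteq> y\<close> by simp
    note this \<open>x \<in> set ys'\<close>
    then show False using hx[rule_format, OF \<open>y \<in> set xs\<close>] hy[rule_format, OF \<open>x \<in> set ys'\<close>] by simp
  qed
  moreover have "x \<notin> set xs" using hx by auto
  moreover have "y \<notin> set ys'" using hy by auto
  ultimately have "set xs = set ys'" using Cons.prems(3) ys by (simp add: insert_ident)
  then have "xs = ys'" using Cons ys by auto
  then show ?case using \<open>x = y\<close> ys by simp
qed

lemma nf_unique: "nf_data k1 xs1 \<Longrightarrow> nf_data k2 xs2 \<Longrightarrow>
   (\<forall>\<rho>. ev \<rho> (to_level k1 xs1) = ev \<rho> (to_level k2 xs2)) \<Longrightarrow> k1 = k2 \<and> xs1 = xs2"
proof -
  assume n1: "nf_data k1 xs1" and n2: "nf_data k2 xs2" and e: "\<forall>\<rho>. ev \<rho> (to_level k1 xs1) = ev \<rho> (to_level k2 xs2)"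
  have k: "k1 = k2" using e ev0[OF n1] ev0[OF n2] by metis
  have sub: "set xs1 \<subseteq> set xs2" if n1: "nf_data k xs1" and n2: "nf_data k xs2"
     and e: "\<forall>\<rho>. ev \<rho> (to_level k xs1) = ev \<rho> (to_level k xs2)" for xs1 xs2 k
  proof
    fix p assume p: "p \<in> set xs1"
    obtain i n where pi: "p = (i, n)" by fastforce
    define \<rho> where "\<rho> = (\<lambda>j. if j = i then Suc k else (0::nat))"
    have v1: "ev \<rho> (to_level k xs1) = Suc k + n"
      using evi_in[OF n1] p pi unfolding \<rho>_def by simp
    have ee: "ev \<rho> (to_level k xs1) = ev \<rho> (to_level k xs2)" using e by blast
    show "p \<in> set xs2"
    proof (cases "i \<in> fst ` set xs2")
      case True
      then obtain n' where "(i, n') \<in> set xs2" by force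
      then have "ev \<rho> (to_level k xs2) = Suc k + n'" using evi_in[OF n2] unfolding \<rho>_def by simp
      then have "n' = n" using v1 ee by simp
      then show ?thesis using \<open>(i, n') \<in> set xs2\<close> pi by simp
    next
      case False
      then show ?thesis using evi_out[OF n2 False] v1 ee unfolding \<rho>_def by simp
    qed
  qed
  have e1: "\<forall>\<rho>. ev \<rho> (to_level k1 xs1) = ev \<rho> (to_level k1 xs2)" using e k by simp
  have e2: "\<forall>\<rho>. ev \<rho> (to_level k1 xs2) = ev \<rho> (to_level k1 xs1)" using e1 by simp
  have "set xs1 = set xs2" using sub[OF n1 n2[folded k] e1] sub[OF n2[folded k] n1 e2] by (rule subset_antisym)
  then have "xs1 = xs2" using n1 n2 sorted_eq by (auto simp: nf_data_def)
  then show ?thesis using k by simp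
qed

lemma nf_rep_prop: "nf_data (fst (nf_rep l)) (snd (nf_rep l)) \<and> l \<simeq> to_level (fst (nf_rep l)) (snd (nf_rep l))"
proof -
  have "\<exists>!p. nf_data (fst p) (snd p) \<and> l \<simeq> to_level (fst p) (snd p)"
  proof -
    obtain k xs where h: "nf_data k xs" "l \<simeq> to_level k xs" using nf_exists by blast
    show ?thesis
    proof (rule ex1I[of _ "(k, xs)"])
      show "nf_data (fst (k, xs)) (snd (k, xs)) \<and> l \<simeq> to_level (fst (k, xs)) (snd (k, xs))" using h by simp
      fix p assume p: "nf_data (fst p) (snd p) \<and> l \<simeq> to_level (fst p) (snd p)"
      have "\<forall>\<rho>. ev \<rho> (to_level (fst p) (snd p)) = ev \<rho> (to_level k xs)"
        using p h sound by metis
      then show "p = (k, xs)" using nf_unique[of "fst p" "snd p" k xs] p h by (simp add: prod_eq_iff)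
    qed
  qed
  then show ?thesis unfolding nf_rep_def by (rule theI')
qed

lemma eq_iff_sem: "(a::'v::linorder lvl) \<simeq> b \<longleftrightarrow> (\<forall>\<rho>. ev \<rho> a = ev \<rho> b)"
proof
  assume "a \<simeq> b" then show "\<forall>\<rho>. ev \<rho> a = ev \<rho> b" using sound by blast
next
  assume e: "\<forall>\<rho>. ev \<rho> a = ev \<rho> b"
  let ?pa = "nf_rep a" and ?pb = "nf_rep b"
  have ha: "nf_data (fst ?pa) (snd ?pa)" "a \<simeq> to_level (fst ?pa) (snd ?pa)" using nf_rep_prop by blast+
  have hb: "nf_data (fst ?pb) (snd ?pb)" "b \<simeq> to_level (fst ?pb) (snd ?pb)" using nf_rep_prop by blast+
  have "\<forall>\<rho>. ev \<rho> (to_level (fst ?pa) (snd ?pa)) = ev \<rho> (to_level (fst ?pb) (snd ?pb))"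
    using e sound[OF ha(2)] sound[OF hb(2)] by metis
  then have "to_level (fst ?pa) (snd ?pa) = to_level (fst ?pb) (snd ?pb)"
    using nf_unique[OF ha(1) hb(1)] by simp
  then show "a \<simeq> b" using ha(2) hb(2) by (metis lvl_eq.sym lvl_eq.trans)
qed


lemma max_remove:
  fixes A1 A2 B1 B2 :: "nat set"
  assumes f: "finite A1" "finite A2" "finite B1" "finite B2" and ne: "A1 \<noteq> {}" "A2 \<noteq> {}"
    and d1: "\<forall>b\<in>B1. \<exists>a\<in>A2. b < a" and d2: "\<forall>b\<in>B2. \<exists>a\<in>A1. b < a"
  shows "Lattices_Big.Max (A1 \<union> B1) = Lattices_Big.Max (A2 \<union> B2) \<longleftrightarrow> Lattices_Big.Max A1 = Lattices_Big.Max A2"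
proof -
  have gen: "Lattices_Big.Max (A \<union> B) = Lattices_Big.Max A \<or> Lattices_Big.Max (A \<union> B) < Lattices_Big.Max A'"
       "Lattices_Big.Max A \<le> Lattices_Big.Max (A \<union> B)"
    if h: "finite A" "finite A'" "finite B" "A \<noteq> {}" "A' \<noteq> {}" "\<forall>b\<in>B. \<exists>a\<in>A'. b < a" for A A' B :: "nat set"
  proof -
    have fin: "finite (A \<union> B)" "A \<union> B \<noteq> {}" using h by auto
    have "Lattices_Big.Max (A \<union> B) \<in> A \<union> B" by (rule Max_in[OF fin])
    then show "Lattices_Big.Max (A \<union> B) = Lattices_Big.Max A \<or> Lattices_Big.Max (A \<union> B) < Lattices_Big.Max A'"
    proof
      assume "Lattices_Big.Max (A \<union> B) \<in> A"
      then have "Lattices_Big.Max (A \<union> B) \<le> Lattices_Big.Max A" using h by simp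
      moreover have "Lattices_Big.Max A \<le> Lattices_Big.Max (A \<union> B)" using h by (simp add: Max_mono)
      ultimately show ?thesis by simp
    next
      assume "Lattices_Big.Max (A \<union> B) \<in> B"
      then obtain a where "a \<in> A'" "Lattices_Big.Max (A \<union> B) < a" using h by blast
      moreover have "a \<le> Lattices_Big.Max A'" using h \<open>a \<in> A'\<close> by simp
      ultimately show ?thesis by simp
    qed
    show "Lattices_Big.Max A \<le> Lattices_Big.Max (A \<union> B)" using h by (simp add: Max_mono)
  qed
  note g1 = gen[OF f(1) f(2) f(3) ne(1) ne(2) d1] and g2 = gen[OF f(2) f(1) f(4) ne(2) ne(1) d2]
  have "Lattices_Big.Max A2 \<le> Lattices_Big.Max (A2 \<union> B2)" by (rule g2(2))
  show ?thesis using g1 g2 by linarith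
qed

lemma shift_lvl:
  assumes "m \<le> k" "\<forall>(i,n)\<in>set ys. m \<le> n"
  shows "ev \<sigma> (to_level (k-m) (map (\<lambda>(i,n). (i,n-m)) ys)) + m = ev \<sigma> (to_level k ys)"
proof -
  let ?f = "\<lambda>(i,n). \<sigma> i + n"
  have e: "(\<lambda>x. x + m) ` insert (k-m) (?f ` set (map (\<lambda>(i,n). (i,n-m)) ys)) = insert k (?f ` set ys)"
  proof -
    have "(\<lambda>x. x + m) ` (?f ` set (map (\<lambda>(i,n). (i,n-m)) ys)) = ?f ` set ys"
      unfolding set_map image_image
      by (rule image_cong[OF HOL.refl]) (use assms(2) in auto)
    then show ?thesis using assms(1) by simp
  qed
  have "ev \<sigma> (to_level (k-m) (map (\<lambda>(i,n). (i,n-m)) ys)) + m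
      = Lattices_Big.Max ((\<lambda>x. x + m) ` insert (k-m) (?f ` set (map (\<lambda>(i,n). (i,n-m)) ys)))"
    unfolding ev_to_level by (rule mono_Max_commute) (auto simp: mono_def)
  then show ?thesis unfolding e ev_to_level .
qed

lemma norm_ok: "subst \<theta> (fst c) \<simeq> subst \<theta> (snd c) \<longleftrightarrow>
   subst \<theta> (fst (norm_constr c)) \<simeq> subst \<theta> (snd (norm_constr c))"
proof -
  obtain k1 xs1 where r1: "nf_rep (fst c) = (k1, xs1)" by (cases "nf_rep (fst c)")
  obtain k2 xs2 where r2: "nf_rep (snd c) = (k2, xs2)" by (cases "nf_rep (snd c)")
  have n1: "nf_data k1 xs1" "fst c \<simeq> to_level k1 xs1" using nf_rep_prop[of "fst c"] r1 by auto
  have n2: "nf_data k2 xs2" "snd c \<simeq> to_level k2 xs2" using nf_rep_prop[of "snd c"] r2 by auto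
  define ys1 where "ys1 = filter (\<lambda>(i, n). \<not> (\<exists>n2. (i, n2) \<in> set xs2 \<and> n < n2)) xs1"
  define ys2 where "ys2 = filter (\<lambda>(i, n). \<not> (\<exists>n1. (i, n1) \<in> set xs1 \<and> n < n1)) xs2"
  define m where "m = Min ({k1, k2} \<union> snd ` set ys1 \<union> snd ` set ys2)"
  define zs1 where "zs1 = map (\<lambda>(i, n). (i, n - m)) ys1"
  define zs2 where "zs2 = map (\<lambda>(i, n). (i, n - m)) ys2"
  have nc: "norm_constr c = (to_level (k1 - m) zs1, to_level (k2 - m) zs2)"
    unfolding norm_constr_def r1 r2 Let_def ys1_def ys2_def m_def zs1_def zs2_def by simp
  have mfin: "finite ({k1, k2} \<union> snd ` set ys1 \<union> snd ` set ys2)" by simp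
  have mk1: "m \<le> k1" unfolding m_def by (rule Min_le[OF mfin]) simp
  have mk2: "m \<le> k2" unfolding m_def by (rule Min_le[OF mfin]) simp
  have my1: "\<forall>(i,n)\<in>set ys1. m \<le> n"
  proof (intro ballI, clarify)
    fix i n assume "(i, n) \<in> set ys1"
    then have "n \<in> {k1, k2} \<union> snd ` set ys1 \<union> snd ` set ys2" by (metis UnI1 UnI2 imageI snd_conv)
    then show "m \<le> n" unfolding m_def by (rule Min_le[OF mfin])
  qed
  have my2: "\<forall>(i,n)\<in>set ys2. m \<le> n"
  proof (intro ballI, clarify)
    fix i n assume "(i, n) \<in> set ys2"
    then have "n \<in> {k1, k2} \<union> snd ` set ys1 \<union> snd ` set ys2" by (metis UnI2 imageI snd_conv)
    then show "m \<le> n" unfolding m_def by (rule Min_le[OF mfin])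
  qed
  have point: "ev \<sigma> (to_level k1 xs1) = ev \<sigma> (to_level k2 xs2) \<longleftrightarrow>
      ev \<sigma> (to_level (k1 - m) zs1) = ev \<sigma> (to_level (k2 - m) zs2)" for \<sigma>
  proof -
    let ?f = "\<lambda>(i,n). \<sigma> i + n"
    have s1: "ev \<sigma> (to_level (k1 - m) zs1) + m = ev \<sigma> (to_level k1 ys1)"
      unfolding zs1_def by (rule shift_lvl[OF mk1 my1])
    have s2: "ev \<sigma> (to_level (k2 - m) zs2) + m = ev \<sigma> (to_level k2 ys2)"
      unfolding zs2_def by (rule shift_lvl[OF mk2 my2])
    have u1: "insert k1 (?f ` set xs1) = insert k1 (?f ` set ys1) \<union> ?f ` (set xs1 - set ys1)"
      unfolding ys1_def by auto
    have u2: "insert k2 (?f ` set xs2) = insert k2 (?f ` set ys2) \<union> ?f ` (set xs2 - set ys2)"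
      unfolding ys2_def by auto
    have d1: "\<forall>b\<in>?f ` (set xs1 - set ys1). \<exists>a\<in>insert k2 (?f ` set ys2). b < a"
    proof
      fix b assume "b \<in> ?f ` (set xs1 - set ys1)"
      then obtain i n where p: "(i, n) \<in> set xs1" "(i, n) \<notin> set ys1" "b = \<sigma> i + n" by auto
      then obtain n2 where q: "(i, n2) \<in> set xs2" "n < n2" unfolding ys1_def by auto
      have "(i, n2) \<in> set ys2"
      proof (rule ccontr)
        assume "(i, n2) \<notin> set ys2"
        then obtain n1 where "(i, n1) \<in> set xs1" "n2 < n1" using q unfolding ys2_def by auto
        then show False using nf_keys[OF n1(1) p(1)] q by fastforce
      qed
      then show "\<exists>a\<in>insert k2 (?f ` set ys2). b < a" using p q by force
    qed
    have d2: "\<forall>b\<in>?f ` (set xs2 - set ys2). \<exists>a\<in>insert k1 (?f ` set ys1). b < a"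
    proof
      fix b assume "b \<in> ?f ` (set xs2 - set ys2)"
      then obtain i n where p: "(i, n) \<in> set xs2" "(i, n) \<notin> set ys2" "b = \<sigma> i + n" by auto
      then obtain n1 where q: "(i, n1) \<in> set xs1" "n < n1" unfolding ys2_def by auto
      have "(i, n1) \<in> set ys1"
      proof (rule ccontr)
        assume "(i, n1) \<notin> set ys1"
        then obtain n2 where "(i, n2) \<in> set xs2" "n1 < n2" using q unfolding ys1_def by auto
        then show False using nf_keys[OF n2(1) p(1)] q by fastforce
      qed
      then show "\<exists>a\<in>insert k1 (?f ` set ys1). b < a" using p q by force
    qed
    have "ev \<sigma> (to_level k1 xs1) = ev \<sigma> (to_level k2 xs2) \<longleftrightarrow>
          ev \<sigma> (to_level k1 ys1) = ev \<sigma> (to_level k2 ys2)"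
      unfolding ev_to_level u1 u2 by (rule max_remove[OF _ _ _ _ _ _ d1 d2]) auto
    then show ?thesis using s1 s2 by linarith
  qed
  have "subst \<theta> (fst c) \<simeq> subst \<theta> (snd c) \<longleftrightarrow>
        (\<forall>\<rho>. ev (\<lambda>i. ev \<rho> (\<theta> i)) (fst c) = ev (\<lambda>i. ev \<rho> (\<theta> i)) (snd c))"
    unfolding eq_iff_sem ev_subst ..
  also have "\<dots> \<longleftrightarrow> (\<forall>\<rho>. ev (\<lambda>i. ev \<rho> (\<theta> i)) (to_level k1 xs1) = ev (\<lambda>i. ev \<rho> (\<theta> i)) (to_level k2 xs2))"
    using sound[OF n1(2)] sound[OF n2(2)] by simp
  also have "\<dots> \<longleftrightarrow> (\<forall>\<rho>. ev (\<lambda>i. ev \<rho> (\<theta> i)) (to_level (k1 - m) zs1) = ev (\<lambda>i. ev \<rho> (\<theta> i)) (to_level (k2 - m) zs2))"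
    using point by blast
  also have "\<dots> \<longleftrightarrow> subst \<theta> (fst (norm_constr c)) \<simeq> subst \<theta> (snd (norm_constr c))"
    unfolding nc eq_iff_sem ev_subst by simp
  finally show ?thesis .
qed

theorem mainTheorem6:
  fixes C :: "('v::linorder) constr set" and \<theta> :: "'v \<Rightarrow> 'v lvl"
  assumes "infinite (UNIV :: 'v set)"
    and "finite C"
  shows "\<theta> \<Turnstile> C \<longleftrightarrow> \<theta> \<Turnstile> norm_constrs C"
proof -
  have a: "\<theta> \<Turnstile> D \<longleftrightarrow> (\<forall>c\<in>D. subst \<theta> (fst c) \<simeq> subst \<theta> (snd c))" for D :: "'v constr set"
    unfolding sat_def by (simp add: case_prod_beta)
  have b: "\<theta> \<Turnstile> norm_constrs C \<longleftrightarrow> (\<forall>c\<in>C. subst \<theta> (fst (norm_constr c)) \<simeq> subst \<theta> (snd (norm_constr c)))"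
    unfolding a norm_constrs_def by blast
  have c: "(\<forall>c\<in>C. subst \<theta> (fst c) \<simeq> subst \<theta> (snd c)) \<longleftrightarrow>
     (\<forall>c\<in>C. subst \<theta> (fst (norm_constr c)) \<simeq> subst \<theta> (snd (norm_constr c)))"
    by (rule ball_cong[OF HOL.refl norm_ok])
  show ?thesis using a[of C] b c by (simp only:)
qed

end
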